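(* Let $\{\mathbb{G}_n,\ n=2,3,\ldots\}$ be a sequence of random graphs as described in the context, with $\lim_{n\to\infty}|V_n|=\infty$, and assume that for each $n$, $D_{n,k}$ has the same distribution as $D_{n,1}$ for all $k\in V_n$, and for all distinct $k,\ell\in V_n$, $(D_{n,k},D_{n,\ell})$ has the same joint distribution as $(D_{n,1},D_{n,2})$. Assume that for every $d=0,1,\ldots$ there exists a scalar $L(d)$ such that $P_n(d)\to L(d)$ in probability as $n\to\infty$. If the values $\{L(d),\ d=0,1,\ldots\}$ constitute a pmf $p=(p(d),\ d=0,1,\ldots)$ on $\mathbb{N}$ (i.e. $p(d)=L(d)$), then: (i) there exists an $\mathbb{N}$-valued random variable $D$ with pmf $p$ such that $D_{n,1}\to D$ in distribution; and (ii) for each $d=0,1,\ldots$, $\lim_{n\to\infty}\mathrm{Cov}\big[\mathbf{1}[D_{n,1}=d],\mathbf{1}[D_{n,2}=d]\big]=0$.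
   Context: All random variables are defined on a common probability space $(\Omega,\mathcal{F},\mathbb{P})$. For each $n=2,3,\ldots$, $\mathbb{G}_n$ is a random (possibly directed, self-loops allowed) graph on the deterministic finite node set $V_n=\{1,\ldots,k_n\}$ with $k_n\ge 2$, determined by $\{0,1\}$-valued edge random variables $\{\chi_n(k,\ell),\ k,\ell\in V_n\}$ ($\chi_n(k,\ell)=1$ iff there is an edge from $k$ to $\ell$). The degree of node $k$ is $D_{n,k}=\sum_{\ell\in V_n}\chi_n(k,\ell)$. For $d=0,1,\ldots$, $N_n(d)=\sum_{k\in V_n}\mathbf{1}[D_{n,k}=d]$ and $P_n(d)=N_n(d)/|V_n|$. $\mathbb{N}=\{0,1,2,\ldots\}$. *)

theory Defs
  imports "HOL-Probability.Probability"
begin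

definition nodes :: "(nat \<Rightarrow> nat) \<Rightarrow> nat \<Rightarrow> nat set" where
  "nodes kn n = {1..kn n}"

definition degree :: "(nat \<Rightarrow> nat) \<Rightarrow> (nat \<Rightarrow> nat \<Rightarrow> nat \<Rightarrow> 'a \<Rightarrow> bool) \<Rightarrow> nat \<Rightarrow> nat \<Rightarrow> 'a \<Rightarrow> nat" where
  "degree kn chi n k \<omega> = (\<Sum>l\<in>nodes kn n. if chi n k l \<omega> then 1 else 0)"

definition deg_count :: "(nat \<Rightarrow> nat) \<Rightarrow> (nat \<Rightarrow> nat \<Rightarrow> nat \<Rightarrow> 'a \<Rightarrow> bool) \<Rightarrow> nat \<Rightarrow> nat \<Rightarrow> 'a \<Rightarrow> nat" where
  "deg_count kn chi n d \<omega> = (\<Sum>k\<in>nodes kn n. if degree kn chi n k \<omega> = d then 1 else 0)"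

definition deg_freq :: "(nat \<Rightarrow> nat) \<Rightarrow> (nat \<Rightarrow> nat \<Rightarrow> nat \<Rightarrow> 'a \<Rightarrow> bool) \<Rightarrow> nat \<Rightarrow> nat \<Rightarrow> 'a \<Rightarrow> real" where
  "deg_freq kn chi n d \<omega> = real (deg_count kn chi n d \<omega>) / real (card (nodes kn n))"

definition covariance :: "'a measure \<Rightarrow> ('a \<Rightarrow> real) \<Rightarrow> ('a \<Rightarrow> real) \<Rightarrow> real" where
  "covariance M X Y =
     prob_space.expectation M (\<lambda>\<omega>. (X \<omega> - prob_space.expectation M X) * (Y \<omega> - prob_space.expectation M Y))"

definition conv_in_prob :: "'a measure \<Rightarrow> (nat \<Rightarrow> 'a \<Rightarrow> real) \<Rightarrow> real \<Rightarrow> bool" where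
  "conv_in_prob M X c \<longleftrightarrow>
     (\<forall>\<epsilon>>0. (\<lambda>n. measure M {\<omega>\<in>space M. \<bar>X n \<omega> - c\<bar> > \<epsilon>}) \<longlonglongrightarrow> 0)"

end

theory Submission imports Defs begin

lemma one_step:
  fixes Y :: "'a \<Rightarrow> real"
  assumes P: "prob_space M" and meas: "Y \<in> borel_measurable M"
    and bnd: "\<And>\<omega>. \<omega> \<in> space M \<Longrightarrow> \<bar>Y \<omega>\<bar> \<le> B" and eps: "\<epsilon> > 0"
  shows "\<bar>prob_space.expectation M Y\<bar> \<le> \<epsilon> + B * measure M {\<omega>\<in>space M. \<bar>Y \<omega>\<bar> > \<epsilon>}"
proof -
  interpret prob_space M by (rule P)
  let ?A = "{\<omega>\<in>space M. \<bar>Y \<omega>\<bar> > \<epsilon>}"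
  have A: "?A \<in> sets M" using meas by measurable
  have intY: "integrable M (\<lambda>\<omega>. \<bar>Y \<omega>\<bar>)"
    by (rule integrable_const_bound[where B=B]) (use meas in \<open>auto intro!: AE_I2 bnd\<close>)
  have intI: "integrable M (\<lambda>\<omega>. \<epsilon> + B * indicator ?A \<omega>)"
    apply (rule integrable_const_bound[where B="\<bar>\<epsilon>\<bar> + \<bar>B\<bar>"])
     apply (auto intro!: AE_I2 simp: indicator_def)[1]
    using A by measurable
  have "\<bar>expectation Y\<bar> \<le> expectation (\<lambda>\<omega>. \<bar>Y \<omega>\<bar>)"
    using integral_norm_bound[of M Y] by simp
  also have "\<dots> \<le> expectation (\<lambda>\<omega>. \<epsilon> + B * indicator ?A \<omega>)"
  proof (rule integral_mono[OF intY intI])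
    fix \<omega> assume w: "\<omega> \<in> space M"
    show "\<bar>Y \<omega>\<bar> \<le> \<epsilon> + B * indicator ?A \<omega>"
      using bnd[OF w] eps w by (auto simp: indicator_def)
  qed
  also have "\<dots> = \<epsilon> + B * measure M ?A"
  proof -
    have i2: "integrable M (\<lambda>\<omega>. B * indicator ?A \<omega>)"
      using A by (intro integrable_mult_right integrable_real_indicator) (auto simp: emeasure_eq_measure)
    have "expectation (\<lambda>\<omega>. \<epsilon> + B * indicator ?A \<omega>) = expectation (\<lambda>_. \<epsilon>) + expectation (\<lambda>\<omega>. B * indicator ?A \<omega>)"
      by (rule Bochner_Integration.integral_add[OF _ i2]) simp
    also have "\<dots> = \<epsilon> + B * measure M ?A"
      using A by (simp add: prob_space Int_absorb2 sets.sets_into_space)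
    finally show ?thesis .
  qed
  finally show ?thesis .
qed

lemma bdd_conv:
  fixes X :: "nat \<Rightarrow> 'a \<Rightarrow> real"
  assumes P: "prob_space M"
    and meas: "eventually (\<lambda>n. X n \<in> borel_measurable M) sequentially"
    and bnd: "eventually (\<lambda>n. \<forall>\<omega>\<in>space M. \<bar>X n \<omega> - c\<bar> \<le> B) sequentially"
    and conv: "conv_in_prob M X c"
  shows "(\<lambda>n. prob_space.expectation M (X n)) \<longlonglongrightarrow> c"
proof (rule tendstoI)
  interpret prob_space M by (rule P)
  fix e :: real assume e: "e > 0"
  have e2: "e/2 > 0" using e by simp
  have "(\<lambda>n. measure M {\<omega>\<in>space M. \<bar>X n \<omega> - c\<bar> > e/2}) \<longlonglongrightarrow> 0"
    using conv e2 unfolding conv_in_prob_def by blast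
  moreover have "e / (2 * (\<bar>B\<bar> + 1)) > 0" using e by (simp add: add_pos_nonneg)
  ultimately have ev: "eventually (\<lambda>n. measure M {\<omega>\<in>space M. \<bar>X n \<omega> - c\<bar> > e/2} < e / (2 * (\<bar>B\<bar> + 1))) sequentially"
    by (auto dest: order_tendstoD(2))
  show "eventually (\<lambda>n. dist (expectation (X n)) c < e) sequentially"
    using ev meas bnd
  proof eventually_elim
    case (elim n)
    let ?m = "measure M {\<omega>\<in>space M. \<bar>X n \<omega> - c\<bar> > e/2}"
    have m0: "?m \<ge> 0" by simp
    have intX: "integrable M (X n)"
      by (rule integrable_const_bound[where B="\<bar>c\<bar> + B"]) (use elim in \<open>auto intro!: AE_I2\<close>)
    have "expectation (X n) - c = expectation (\<lambda>\<omega>. X n \<omega> - c)"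
      using intX by (simp add: prob_space)
    moreover have "\<bar>expectation (\<lambda>\<omega>. X n \<omega> - c)\<bar> \<le> e/2 + B * ?m"
      by (rule one_step[OF P]) (use elim e2 in auto)
    moreover have "B * ?m \<le> (\<bar>B\<bar> + 1) * ?m" using m0
      by (intro mult_right_mono) auto
    moreover have "(\<bar>B\<bar> + 1) * ?m < e/2"
      using elim(1) by (simp add: field_simps add_pos_nonneg)
    ultimately show ?case by (simp add: dist_real_def)
  qed
qed

lemma deg_meas:
  assumes "\<And>l. l \<in> nodes kn n \<Longrightarrow> chi n k l \<in> measurable M (count_space UNIV)"
  shows "degree kn chi n k \<in> measurable M (count_space UNIV)"
proof -
  have "(\<lambda>\<omega>. \<Sum>l\<in>nodes kn n. if chi n k l \<omega> then 1 else 0::nat) \<in> borel_measurable M"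
  proof (rule borel_measurable_sum)
    fix l assume l: "l \<in> nodes kn n"
    have "(\<lambda>b. if b then 1 else 0::nat) \<in> measurable (count_space UNIV) borel" by simp
    from measurable_compose[OF assms[OF l] this]
    show "(\<lambda>\<omega>. if chi n k l \<omega> then 1 else 0::nat) \<in> borel_measurable M" by (simp add: o_def)
  qed
  then show ?thesis unfolding degree_def
    using measurable_cong_sets[OF refl sets_borel_eq_count_space] by blast
qed

lemma exp_if:
  assumes P: "prob_space M" and A: "{\<omega>\<in>space M. Q \<omega>} \<in> sets M"
  shows "prob_space.expectation M (\<lambda>\<omega>. if Q \<omega> then 1 else 0::real) = measure M {\<omega>\<in>space M. Q \<omega>}"
proof -
  have "prob_space.expectation M (\<lambda>\<omega>. if Q \<omega> then 1 else 0::real) = integral\<^sup>L M (indicator {\<omega>\<in>space M. Q \<omega>})"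
    by (rule Bochner_Integration.integral_cong) (auto simp: indicator_def)
  also have "\<dots> = measure M {\<omega>\<in>space M. Q \<omega>}"
    by (simp add: Int_absorb2)
  finally show ?thesis .
qed

lemma int_if:
  assumes P: "prob_space M" and A: "{\<omega>\<in>space M. Q \<omega>} \<in> sets M"
  shows "integrable M (\<lambda>\<omega>. if Q \<omega> then 1 else 0::real)"
proof -
  interpret prob_space M by (rule P)
  have "integrable M (indicator {\<omega>\<in>space M. Q \<omega>} :: 'a \<Rightarrow> real)"
    using A by (auto simp: emeasure_eq_measure)
  moreover have "integrable M (indicator {\<omega>\<in>space M. Q \<omega>} :: 'a \<Rightarrow> real) \<longleftrightarrow> integrable M (\<lambda>\<omega>. if Q \<omega> then 1 else 0::real)"
    by (rule Bochner_Integration.integrable_cong) (auto simp: indicator_def)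
  ultimately show ?thesis by simp
qed

lemma df_eq: "deg_freq kn chi n d \<omega> =
   (\<Sum>k\<in>nodes kn n. if degree kn chi n k \<omega> = d then 1 else 0) / real (kn n)"
  unfolding deg_freq_def deg_count_def by (simp add: nodes_def of_nat_sum) (intro disjI2 sum.cong; simp)

context
  fixes M :: "'a measure" and kn :: "nat \<Rightarrow> nat" and chi :: "nat \<Rightarrow> nat \<Rightarrow> nat \<Rightarrow> 'a \<Rightarrow> bool"
    and n :: nat and d :: nat
  assumes P: "prob_space M"
    and kn2: "kn n \<ge> 2"
    and rv: "\<And>k l. k \<in> nodes kn n \<Longrightarrow> l \<in> nodes kn n \<Longrightarrow>
                   chi n k l \<in> measurable M (count_space UNIV)"
    and marg: "\<And>k. k \<in> nodes kn n \<Longrightarrow>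
                   distr M (count_space UNIV) (degree kn chi n k) =
                   distr M (count_space UNIV) (degree kn chi n 1)"
    and joint: "\<And>k l. k \<in> nodes kn n \<Longrightarrow> l \<in> nodes kn n \<Longrightarrow> k \<noteq> l \<Longrightarrow>
                   distr M (count_space UNIV) (\<lambda>\<omega>. (degree kn chi n k \<omega>, degree kn chi n l \<omega>)) =
                   distr M (count_space UNIV) (\<lambda>\<omega>. (degree kn chi n 1 \<omega>, degree kn chi n 2 \<omega>))"
begin

lemma in1: "1 \<in> nodes kn n" and in2: "2 \<in> nodes kn n"
  using kn2 by (auto simp: nodes_def)

lemma Dm: "k \<in> nodes kn n \<Longrightarrow> degree kn chi n k \<in> measurable M (count_space UNIV)"
  by (rule deg_meas) (rule rv)

lemma ev1: "k \<in> nodes kn n \<Longrightarrow> {\<omega>\<in>space M. degree kn chi n k \<omega> = d} \<in> sets M"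
  using Dm by measurable

lemma ev2: "k \<in> nodes kn n \<Longrightarrow> l \<in> nodes kn n \<Longrightarrow>
   {\<omega>\<in>space M. degree kn chi n k \<omega> = d \<and> degree kn chi n l \<omega> = d} \<in> sets M"
  using Dm by measurable

lemma Im: "k \<in> nodes kn n \<Longrightarrow> (\<lambda>\<omega>. if degree kn chi n k \<omega> = d then 1 else 0::real) \<in> borel_measurable M"
proof -
  assume k: "k \<in> nodes kn n"
  have "(\<lambda>m. if m = d then 1 else 0::real) \<in> measurable (count_space UNIV) borel" by simp
  from measurable_compose[OF Dm[OF k] this] show ?thesis by (simp add: o_def)
qed

lemma pmarg: "k \<in> nodes kn n \<Longrightarrow> measure M {\<omega>\<in>space M. degree kn chi n k \<omega> = d}
    = measure M {\<omega>\<in>space M. degree kn chi n 1 \<omega> = d}"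
proof -
  assume k: "k \<in> nodes kn n"
  have "measure (distr M (count_space UNIV) (degree kn chi n k)) {d} =
        measure (distr M (count_space UNIV) (degree kn chi n 1)) {d}" using marg[OF k] by simp
  then have "measure M (degree kn chi n k -` {d} \<inter> space M) = measure M (degree kn chi n 1 -` {d} \<inter> space M)"
    using Dm[OF k] Dm[OF in1] by (simp add: measure_distr)
  moreover have "\<And>j. degree kn chi n j -` {d} \<inter> space M = {\<omega>\<in>space M. degree kn chi n j \<omega> = d}" by auto
  ultimately show ?thesis by simp
qed

lemma pjoint: "k \<in> nodes kn n \<Longrightarrow> l \<in> nodes kn n \<Longrightarrow> k \<noteq> l \<Longrightarrow>
    measure M {\<omega>\<in>space M. degree kn chi n k \<omega> = d \<and> degree kn chi n l \<omega> = d}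
    = measure M {\<omega>\<in>space M. degree kn chi n 1 \<omega> = d \<and> degree kn chi n 2 \<omega> = d}"
proof -
  assume k: "k \<in> nodes kn n" and l: "l \<in> nodes kn n" and kl: "k \<noteq> l"
  have pm: "\<And>i j. i \<in> nodes kn n \<Longrightarrow> j \<in> nodes kn n \<Longrightarrow>
      (\<lambda>\<omega>. (degree kn chi n i \<omega>, degree kn chi n j \<omega>)) \<in> measurable M (count_space UNIV)"
  proof -
    fix i j assume i: "i \<in> nodes kn n" and j: "j \<in> nodes kn n"
    have "(\<lambda>\<omega>. (degree kn chi n i \<omega>, degree kn chi n j \<omega>)) \<in> measurable M (count_space UNIV \<Otimes>\<^sub>M count_space UNIV)"
      using Dm[OF i] Dm[OF j] by (rule measurable_Pair)
    then show "(\<lambda>\<omega>. (degree kn chi n i \<omega>, degree kn chi n j \<omega>)) \<in> measurable M (count_space UNIV)"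
      by (simp add: pair_measure_countable)
  qed
  have "measure (distr M (count_space UNIV) (\<lambda>\<omega>. (degree kn chi n k \<omega>, degree kn chi n l \<omega>))) {(d,d)} =
        measure (distr M (count_space UNIV) (\<lambda>\<omega>. (degree kn chi n 1 \<omega>, degree kn chi n 2 \<omega>))) {(d,d)}"
    using joint[OF k l kl] by simp
  then have "measure M ((\<lambda>\<omega>. (degree kn chi n k \<omega>, degree kn chi n l \<omega>)) -` {(d,d)} \<inter> space M) =
        measure M ((\<lambda>\<omega>. (degree kn chi n 1 \<omega>, degree kn chi n 2 \<omega>)) -` {(d,d)} \<inter> space M)"
    using pm[OF k l] pm[OF in1 in2] by (simp add: measure_distr)
  moreover have "\<And>i j. (\<lambda>\<omega>. (degree kn chi n i \<omega>, degree kn chi n j \<omega>)) -` {(d,d)} \<inter> space M =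
       {\<omega>\<in>space M. degree kn chi n i \<omega> = d \<and> degree kn chi n j \<omega> = d}" by auto
  ultimately show ?thesis by simp
qed


lemma cardS: "card (nodes kn n) = kn n" by (simp add: nodes_def)

lemma E1: "prob_space.expectation M (deg_freq kn chi n d) = measure M {\<omega>\<in>space M. degree kn chi n 1 \<omega> = d}"
proof -
  interpret prob_space M by (rule P)
  have "expectation (deg_freq kn chi n d) =
     expectation (\<lambda>\<omega>. (\<Sum>k\<in>nodes kn n. if degree kn chi n k \<omega> = d then 1 else 0) / real (kn n))"
    by (simp add: df_eq[abs_def])
  also have "\<dots> = (\<Sum>k\<in>nodes kn n. expectation (\<lambda>\<omega>. if degree kn chi n k \<omega> = d then 1 else 0)) / real (kn n)"
    by (subst Bochner_Integration.integral_divide_zero, subst Bochner_Integration.integral_sum) (auto intro: int_if[OF P] ev1)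
  also have "\<dots> = (\<Sum>k\<in>nodes kn n. measure M {\<omega>\<in>space M. degree kn chi n 1 \<omega> = d}) / real (kn n)"
    by (intro arg_cong2[where f="(/)"] sum.cong refl) (simp add: exp_if[OF P ev1] pmarg)
  also have "\<dots> = measure M {\<omega>\<in>space M. degree kn chi n 1 \<omega> = d}"
    using kn2 by (simp add: cardS)
  finally show ?thesis .
qed

lemma E2: "prob_space.expectation M (\<lambda>\<omega>. (deg_freq kn chi n d \<omega>)^2) =
    measure M {\<omega>\<in>space M. degree kn chi n 1 \<omega> = d} / real (kn n) +
    (real (kn n) - 1) / real (kn n) * measure M {\<omega>\<in>space M. degree kn chi n 1 \<omega> = d \<and> degree kn chi n 2 \<omega> = d}"
proof -
  interpret prob_space M by (rule P)
  let ?a = "measure M {\<omega>\<in>space M. degree kn chi n 1 \<omega> = d}"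
  let ?b = "measure M {\<omega>\<in>space M. degree kn chi n 1 \<omega> = d \<and> degree kn chi n 2 \<omega> = d}"
  let ?S = "nodes kn n" let ?K = "real (kn n)"
  let ?J = "\<lambda>k l \<omega>. if degree kn chi n k \<omega> = d \<and> degree kn chi n l \<omega> = d then 1 else 0::real"
  have sq: "\<And>\<omega>. (deg_freq kn chi n d \<omega>)^2 = (\<Sum>k\<in>?S. \<Sum>l\<in>?S. ?J k l \<omega>) / ?K^2"
  proof -
    fix \<omega>
    have "(deg_freq kn chi n d \<omega>)^2 =
      ((\<Sum>k\<in>?S. if degree kn chi n k \<omega> = d then 1 else 0) * (\<Sum>l\<in>?S. if degree kn chi n l \<omega> = d then 1 else 0::real)) / ?K^2"
      by (simp add: df_eq power2_eq_square)
    also have "\<dots> = (\<Sum>k\<in>?S. \<Sum>l\<in>?S. ?J k l \<omega>) / ?K^2"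
      by (simp add: sum_product) (intro disjI2 sum.cong; simp)+
    finally show "(deg_freq kn chi n d \<omega>)^2 = (\<Sum>k\<in>?S. \<Sum>l\<in>?S. ?J k l \<omega>) / ?K^2" .
  qed
  have EJ: "\<And>k l. k \<in> ?S \<Longrightarrow> l \<in> ?S \<Longrightarrow> expectation (?J k l) = (if k = l then ?a else ?b)"
    by (auto simp: exp_if[OF P ev2] pjoint pmarg)
  have inner: "\<And>k. k \<in> ?S \<Longrightarrow> (\<Sum>l\<in>?S. if k = l then ?a else ?b) = ?a + (?K - 1) * ?b"
  proof -
    fix k assume k: "k \<in> ?S"
    have fin: "finite ?S" by (simp add: nodes_def)
    have "(\<Sum>l\<in>?S. if k = l then ?a else ?b) = ?a + (\<Sum>l\<in>?S - {k}. if k = l then ?a else ?b)"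
      using fin k by (simp add: sum.remove)
    also have "(\<Sum>l\<in>?S - {k}. if k = l then ?a else ?b) = (\<Sum>l\<in>?S - {k}. ?b)"
      by (rule sum.cong) auto
    also have "\<dots> = (?K - 1) * ?b" using fin k kn2 by (simp add: cardS of_nat_diff)
    finally show "(\<Sum>l\<in>?S. if k = l then ?a else ?b) = ?a + (?K - 1) * ?b" .
  qed
  have "expectation (\<lambda>\<omega>. (deg_freq kn chi n d \<omega>)^2) = expectation (\<lambda>\<omega>. (\<Sum>k\<in>?S. \<Sum>l\<in>?S. ?J k l \<omega>) / ?K^2)"
    by (simp add: sq)
  also have "\<dots> = (\<Sum>k\<in>?S. \<Sum>l\<in>?S. expectation (?J k l)) / ?K^2"
    by (subst Bochner_Integration.integral_divide_zero, subst Bochner_Integration.integral_sum, rule Bochner_Integration.integrable_sum)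
       (auto intro: int_if[OF P] ev2 simp: Bochner_Integration.integral_sum int_if[OF P] ev2)
  also have "\<dots> = (\<Sum>k\<in>?S. ?a + (?K - 1) * ?b) / ?K^2"
    by (intro arg_cong2[where f="(/)"] sum.cong refl) (simp add: EJ inner cong: sum.cong)
  also have "\<dots> = ?a / ?K + (?K - 1) / ?K * ?b"
    using kn2 by (simp add: cardS power2_eq_square field_simps)
  finally show ?thesis .
qed


lemma Cov: "covariance M (\<lambda>\<omega>. if degree kn chi n 1 \<omega> = d then 1 else 0)
                    (\<lambda>\<omega>. if degree kn chi n 2 \<omega> = d then 1 else 0) =
    measure M {\<omega>\<in>space M. degree kn chi n 1 \<omega> = d \<and> degree kn chi n 2 \<omega> = d}
    - measure M {\<omega>\<in>space M. degree kn chi n 1 \<omega> = d} * measure M {\<omega>\<in>space M. degree kn chi n 1 \<omega> = d}"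
proof -
  interpret prob_space M by (rule P)
  let ?a = "measure M {\<omega>\<in>space M. degree kn chi n 1 \<omega> = d}"
  let ?b = "measure M {\<omega>\<in>space M. degree kn chi n 1 \<omega> = d \<and> degree kn chi n 2 \<omega> = d}"
  let ?X = "\<lambda>\<omega>. if degree kn chi n 1 \<omega> = d then 1 else 0::real"
  let ?Y = "\<lambda>\<omega>. if degree kn chi n 2 \<omega> = d then 1 else 0::real"
  let ?J = "\<lambda>\<omega>. if degree kn chi n 1 \<omega> = d \<and> degree kn chi n 2 \<omega> = d then 1 else 0::real"
  have EX: "expectation ?X = ?a" by (rule exp_if[OF P ev1[OF in1]])
  have EY: "expectation ?Y = ?a" using exp_if[OF P ev1[OF in2]] pmarg[OF in2] by simp
  have EJ: "expectation ?J = ?b" by (rule exp_if[OF P ev2[OF in1 in2]])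
  have iX: "integrable M ?X" by (rule int_if[OF P ev1[OF in1]])
  have iY: "integrable M ?Y" by (rule int_if[OF P ev1[OF in2]])
  have iJ: "integrable M ?J" by (rule int_if[OF P ev2[OF in1 in2]])
  have eq: "(\<lambda>\<omega>. (?X \<omega> - ?a) * (?Y \<omega> - ?a)) = (\<lambda>\<omega>. ((?J \<omega> - ?a * ?X \<omega>) - ?a * ?Y \<omega>) + ?a * ?a)"
    by (auto simp: algebra_simps)
  have "covariance M ?X ?Y = expectation (\<lambda>\<omega>. ((?J \<omega> - ?a * ?X \<omega>) - ?a * ?Y \<omega>) + ?a * ?a)"
    unfolding covariance_def EX EY eq ..
  also have "\<dots> = ((?b - ?a * ?a) - ?a * ?a) + ?a * ?a"
    using iX iY iJ EX EY EJ by (simp add: prob_space)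
  finally show ?thesis by simp
qed

lemma dfm: "deg_freq kn chi n d \<in> borel_measurable M"
proof -
  have "(\<lambda>\<omega>. (\<Sum>k\<in>nodes kn n. if degree kn chi n k \<omega> = d then 1 else 0) / real (kn n)) \<in> borel_measurable M"
    by (intro borel_measurable_divide borel_measurable_sum Im borel_measurable_const)
  then show ?thesis by (simp add: df_eq[abs_def])
qed

end

lemma df_bnd: "0 \<le> deg_freq kn chi n d \<omega> \<and> deg_freq kn chi n d \<omega> \<le> 1"
proof -
  have "deg_count kn chi n d \<omega> \<le> (\<Sum>k\<in>nodes kn n. 1)"
    unfolding deg_count_def by (rule sum_mono) auto
  then have "deg_count kn chi n d \<omega> \<le> card (nodes kn n)" by simp
  then show ?thesis unfolding deg_freq_def
    by (cases "card (nodes kn n) = 0") (auto simp: field_simps)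
qed

theorem proposition3:
  fixes M :: "'a measure"
    and kn :: "nat \<Rightarrow> nat"
    and chi :: "nat \<Rightarrow> nat \<Rightarrow> nat \<Rightarrow> 'a \<Rightarrow> bool"
    and L :: "nat \<Rightarrow> real"
  assumes prob: "prob_space M"
    and kn_ge2: "\<And>n. n \<ge> 2 \<Longrightarrow> kn n \<ge> 2"
    and kn_lim: "filterlim kn at_top sequentially"
    and chi_rv: "\<And>n k l. n \<ge> 2 \<Longrightarrow> k \<in> nodes kn n \<Longrightarrow> l \<in> nodes kn n \<Longrightarrow>
                   chi n k l \<in> measurable M (count_space UNIV)"
    and same_marg: "\<And>n k. n \<ge> 2 \<Longrightarrow> k \<in> nodes kn n \<Longrightarrow>
                   distr M (count_space UNIV) (degree kn chi n k) =
                   distr M (count_space UNIV) (degree kn chi n 1)"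
    and same_joint: "\<And>n k l. n \<ge> 2 \<Longrightarrow> k \<in> nodes kn n \<Longrightarrow> l \<in> nodes kn n \<Longrightarrow> k \<noteq> l \<Longrightarrow>
                   distr M (count_space UNIV) (\<lambda>\<omega>. (degree kn chi n k \<omega>, degree kn chi n l \<omega>)) =
                   distr M (count_space UNIV) (\<lambda>\<omega>. (degree kn chi n 1 \<omega>, degree kn chi n 2 \<omega>))"
    and conv: "\<And>d. conv_in_prob M (\<lambda>n. deg_freq kn chi n d) (L d)"
    and L_nonneg: "\<And>d. L d \<ge> 0"
    and L_sums: "L sums 1"
  shows "(\<exists>p :: nat pmf. (\<forall>d. pmf p d = L d) \<and>
            weak_conv_m (\<lambda>n. distr M borel (\<lambda>\<omega>. real (degree kn chi n 1 \<omega>)))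
                        (distr (measure_pmf p) borel real))
         \<and> (\<forall>d. (\<lambda>n. covariance M
                    (\<lambda>\<omega>. if degree kn chi n 1 \<omega> = d then 1 else 0)
                    (\<lambda>\<omega>. if degree kn chi n 2 \<omega> = d then 1 else 0)) \<longlonglongrightarrow> 0)"
proof -
  interpret prob_space M by (rule prob)
  define a where "a d n = measure M {\<omega>\<in>space M. degree kn chi n 1 \<omega> = d}" for d n
  define b where "b d n = measure M {\<omega>\<in>space M. degree kn chi n 1 \<omega> = d \<and> degree kn chi n 2 \<omega> = d}" for d n
  define K where "K n = real (kn n)" for n
  have ev2: "eventually (\<lambda>n. n \<ge> (2::nat)) sequentially" by (rule eventually_ge_at_top)
  note ctx = prob kn_ge2 chi_rv same_marg same_joint
  have Klim: "(\<lambda>n. inverse (K n)) \<longlonglongrightarrow> 0"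
    unfolding K_def by (rule tendsto_inverse_0_at_top, rule filterlim_compose[OF filterlim_real_sequentially kn_lim])
  have dfmn: "deg_freq kn chi n d \<in> borel_measurable M" if "n \<ge> 2" for n d
    by (rule dfm[OF prob kn_ge2[OF that] chi_rv[OF that] same_marg[OF that] same_joint[OF that]])
  have E1n: "expectation (deg_freq kn chi n d) = a d n" if "n \<ge> 2" for n d
    unfolding a_def by (rule E1[OF prob kn_ge2[OF that] chi_rv[OF that] same_marg[OF that] same_joint[OF that]])
  have alim: "(\<lambda>n. a d n) \<longlonglongrightarrow> L d" for d
  proof -
    have "(\<lambda>n. expectation (deg_freq kn chi n d)) \<longlonglongrightarrow> L d"
    proof (rule bdd_conv[OF prob _ _ conv, where B="1 + \<bar>L d\<bar>"])
      show "eventually (\<lambda>n. deg_freq kn chi n d \<in> borel_measurable M) sequentially"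
        using ev2 by eventually_elim (rule dfmn)
      show "eventually (\<lambda>n. \<forall>\<omega>\<in>space M. \<bar>deg_freq kn chi n d \<omega> - L d\<bar> \<le> 1 + \<bar>L d\<bar>) sequentially"
        using df_bnd[of kn chi] by (intro always_eventually) (smt (verit))
    qed
    moreover have "eventually (\<lambda>n. expectation (deg_freq kn chi n d) = a d n) sequentially"
      using ev2 by eventually_elim (rule E1n)
    ultimately show ?thesis by (rule Lim_transform_eventually)
  qed
  have E2n: "expectation (\<lambda>\<omega>. (deg_freq kn chi n d \<omega>)^2) = a d n / K n + (K n - 1) / K n * b d n"
    if "n \<ge> 2" for n d
    unfolding a_def b_def K_def by (rule E2[OF prob kn_ge2[OF that] chi_rv[OF that] same_marg[OF that] same_joint[OF that]])
  have Covn: "covariance M (\<lambda>\<omega>. if degree kn chi n 1 \<omega> = d then 1 else 0)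
                    (\<lambda>\<omega>. if degree kn chi n 2 \<omega> = d then 1 else 0) = b d n - a d n * a d n"
    if "n \<ge> 2" for n d
    unfolding a_def b_def by (rule Cov[OF prob kn_ge2[OF that] chi_rv[OF that] same_marg[OF that] same_joint[OF that]])
  have sqlim: "(\<lambda>n. expectation (\<lambda>\<omega>. (deg_freq kn chi n d \<omega>)^2)) \<longlonglongrightarrow> (L d)^2" for d
  proof (rule bdd_conv[OF prob, where B="1 + (L d)^2"])
    show "eventually (\<lambda>n. (\<lambda>\<omega>. (deg_freq kn chi n d \<omega>)^2) \<in> borel_measurable M) sequentially"
      using ev2 by eventually_elim (intro borel_measurable_power dfmn)
    show "eventually (\<lambda>n. \<forall>\<omega>\<in>space M. \<bar>(deg_freq kn chi n d \<omega>)^2 - (L d)^2\<bar> \<le> 1 + (L d)^2) sequentially"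
    proof (intro always_eventually allI ballI)
      fix n \<omega>
      have "0 \<le> deg_freq kn chi n d \<omega>" "deg_freq kn chi n d \<omega> \<le> 1" using df_bnd[of kn chi n d \<omega>] by auto
      moreover have "0 \<le> (L d)^2" by simp
      ultimately show "\<bar>(deg_freq kn chi n d \<omega>)^2 - (L d)^2\<bar> \<le> 1 + (L d)^2"
        by (smt (verit) power_le_one zero_le_power)
    qed
    show "conv_in_prob M (\<lambda>n \<omega>. (deg_freq kn chi n d \<omega>)^2) ((L d)^2)"
      unfolding conv_in_prob_def
    proof (intro allI impI)
      fix e :: real assume e: "e > 0"
      define e' where "e' = e / (1 + L d)"
      have e': "e' > 0" using e L_nonneg[of d] unfolding e'_def by (simp add: add_pos_nonneg)
      have lim0: "(\<lambda>n. measure M {\<omega>\<in>space M. \<bar>deg_freq kn chi n d \<omega> - L d\<bar> > e'}) \<longlonglongrightarrow> 0"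
        using conv[of d] e' unfolding conv_in_prob_def by blast
      show "(\<lambda>n. measure M {\<omega>\<in>space M. \<bar>(deg_freq kn chi n d \<omega>)^2 - (L d)^2\<bar> > e}) \<longlonglongrightarrow> 0"
      proof (rule tendsto_sandwich[OF _ _ tendsto_const lim0])
        show "eventually (\<lambda>n. 0 \<le> measure M {\<omega>\<in>space M. \<bar>(deg_freq kn chi n d \<omega>)^2 - (L d)^2\<bar> > e}) sequentially"
          by simp
        show "eventually (\<lambda>n. measure M {\<omega>\<in>space M. \<bar>(deg_freq kn chi n d \<omega>)^2 - (L d)^2\<bar> > e}
               \<le> measure M {\<omega>\<in>space M. \<bar>deg_freq kn chi n d \<omega> - L d\<bar> > e'}) sequentially"
          using ev2
        proof eventually_elim
          case (elim n)
          have sub: "{\<omega>\<in>space M. \<bar>(deg_freq kn chi n d \<omega>)^2 - (L d)^2\<bar> > e}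
               \<subseteq> {\<omega>\<in>space M. \<bar>deg_freq kn chi n d \<omega> - L d\<bar> > e'}"
          proof safe
            fix \<omega> assume "\<omega> \<in> space M" and gt: "\<bar>(deg_freq kn chi n d \<omega>)^2 - (L d)^2\<bar> > e"
            let ?x = "deg_freq kn chi n d \<omega>"
            have x: "0 \<le> ?x" "?x \<le> 1" using df_bnd[of kn chi n d \<omega>] by auto
            have "\<bar>?x^2 - (L d)^2\<bar> = \<bar>?x - L d\<bar> * \<bar>?x + L d\<bar>"
              by (simp add: power2_eq_square abs_mult[symmetric] algebra_simps)
            also have "\<dots> \<le> \<bar>?x - L d\<bar> * (1 + L d)"
              using x L_nonneg[of d] by (intro mult_left_mono) auto
            finally have "e < \<bar>?x - L d\<bar> * (1 + L d)" using gt by simp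
            then show "e' < \<bar>?x - L d\<bar>"
              unfolding e'_def using L_nonneg[of d] by (simp add: divide_less_eq add_pos_nonneg)
          qed
          have "{\<omega>\<in>space M. \<bar>deg_freq kn chi n d \<omega> - L d\<bar> > e'} \<in> sets M"
            using dfmn[OF elim] by measurable
          then show ?case using sub by (rule finite_measure_mono[rotated])
        qed
      qed
    qed
  qed
  have blim: "(\<lambda>n. b d n) \<longlonglongrightarrow> (L d)^2" for d
  proof -
    have "(\<lambda>n. (expectation (\<lambda>\<omega>. (deg_freq kn chi n d \<omega>)^2) - a d n * inverse (K n)) / (1 - inverse (K n)))
          \<longlonglongrightarrow> ((L d)^2 - L d * 0) / (1 - 0)"
      by (intro tendsto_intros sqlim alim Klim) simp
    moreover have "eventually (\<lambda>n. (expectation (\<lambda>\<omega>. (deg_freq kn chi n d \<omega>)^2) - a d n * inverse (K n)) / (1 - inverse (K n)) = b d n) sequentially"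
      using ev2
    proof eventually_elim
      case (elim n)
      have K2: "K n \<ge> 2" using kn_ge2[OF elim] unfolding K_def by simp
      show ?case unfolding E2n[OF elim] using K2 by (simp add: field_simps)
    qed
    ultimately show ?thesis by (simp add: Lim_transform_eventually)
  qed
  have covlim: "\<forall>d. (\<lambda>n. covariance M
                    (\<lambda>\<omega>. if degree kn chi n 1 \<omega> = d then 1 else 0)
                    (\<lambda>\<omega>. if degree kn chi n 2 \<omega> = d then 1 else 0)) \<longlonglongrightarrow> 0"
  proof
    fix d
    have "(\<lambda>n. b d n - a d n * a d n) \<longlonglongrightarrow> (L d)^2 - L d * L d"
      by (intro tendsto_intros blim alim)
    then have "(\<lambda>n. b d n - a d n * a d n) \<longlonglongrightarrow> 0" by (simp add: power2_eq_square)
    moreover have "eventually (\<lambda>n. b d n - a d n * a d n = covariance M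
                    (\<lambda>\<omega>. if degree kn chi n 1 \<omega> = d then 1 else 0)
                    (\<lambda>\<omega>. if degree kn chi n 2 \<omega> = d then 1 else 0)) sequentially"
      using ev2 by eventually_elim (rule Covn[symmetric])
    ultimately show "(\<lambda>n. covariance M
                    (\<lambda>\<omega>. if degree kn chi n 1 \<omega> = d then 1 else 0)
                    (\<lambda>\<omega>. if degree kn chi n 2 \<omega> = d then 1 else 0)) \<longlonglongrightarrow> 0"
      by (rule Lim_transform_eventually)
  qed
  have Lint: "(\<integral>\<^sup>+x. ennreal (L x) \<partial>count_space UNIV) = 1"
    using suminf_ennreal_eq[OF L_nonneg L_sums] by (simp add: nn_integral_count_space_nat)
  define p where "p = embed_pmf L"
  have pmfp: "pmf p d = L d" for d
    unfolding p_def by (rule pmf_embed_pmf[OF L_nonneg Lint])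
  have wc: "weak_conv_m (\<lambda>n. distr M borel (\<lambda>\<omega>. real (degree kn chi n 1 \<omega>)))
                        (distr (measure_pmf p) borel real)"
    unfolding weak_conv_m_def weak_conv_def
  proof (intro allI impI)
    fix x :: real
    define S where "S = {d::nat. real d \<le> x}"
    have finS: "finite S"
    proof -
      have "S \<subseteq> {..nat \<lceil>x\<rceil>}"
      proof
        fix d assume "d \<in> S"
        then have "real d \<le> x" unfolding S_def by simp
        then have "real_of_int (int d) \<le> real_of_int \<lceil>x\<rceil>" using le_of_int_ceiling[of x] by (simp del: le_of_int_ceiling)
        then have "int d \<le> \<lceil>x\<rceil>" by (simp only: of_int_le_iff)
        then show "d \<in> {..nat \<lceil>x\<rceil>}" by simp
      qed
      then show ?thesis by (rule finite_subset) simp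
    qed
    have rhs: "cdf (distr (measure_pmf p) borel real) x = (\<Sum>d\<in>S. L d)"
    proof -
      have "cdf (distr (measure_pmf p) borel real) x = measure p (real -` {..x} \<inter> space (measure_pmf p))"
        unfolding cdf_def2 by (rule measure_distr) auto
      also have "real -` {..x} \<inter> space (measure_pmf p) = S" unfolding S_def by auto
      finally show ?thesis using finS by (simp add: measure_measure_pmf_finite pmfp)
    qed
    have lhs: "cdf (distr M borel (\<lambda>\<omega>. real (degree kn chi n 1 \<omega>))) x = (\<Sum>d\<in>S. a d n)" if n2: "n \<ge> 2" for n
    proof -
      have Dm1: "degree kn chi n 1 \<in> measurable M (count_space UNIV)"
        by (rule Dm[OF prob kn_ge2[OF n2] chi_rv[OF n2] same_marg[OF n2] same_joint[OF n2] in1[OF prob kn_ge2[OF n2] chi_rv[OF n2] same_marg[OF n2] same_joint[OF n2]]])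
      have rm: "(\<lambda>\<omega>. real (degree kn chi n 1 \<omega>)) \<in> borel_measurable M"
        using measurable_compose[OF Dm1, of real borel] by (simp add: o_def)
      have "cdf (distr M borel (\<lambda>\<omega>. real (degree kn chi n 1 \<omega>))) x =
            measure M ((\<lambda>\<omega>. real (degree kn chi n 1 \<omega>)) -` {..x} \<inter> space M)"
        unfolding cdf_def2 by (rule measure_distr[OF rm]) auto
      also have "(\<lambda>\<omega>. real (degree kn chi n 1 \<omega>)) -` {..x} \<inter> space M = degree kn chi n 1 -` S \<inter> space M"
        unfolding S_def by auto
      also have "measure M (degree kn chi n 1 -` S \<inter> space M) = measure (distr M (count_space UNIV) (degree kn chi n 1)) S"
        by (rule measure_distr[OF Dm1, symmetric]) auto
      also have "\<dots> = (\<Sum>d\<in>S. measure (distr M (count_space UNIV) (degree kn chi n 1)) {d})"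
        using finS prob_space_distr[OF Dm1]
        by (intro measure_eq_sum_singleton) (auto simp: prob_space_def finite_measure.emeasure_finite)
      also have "\<dots> = (\<Sum>d\<in>S. a d n)"
      proof (rule sum.cong[OF refl])
        fix d
        have "measure (distr M (count_space UNIV) (degree kn chi n 1)) {d} = measure M (degree kn chi n 1 -` {d} \<inter> space M)"
          by (rule measure_distr[OF Dm1]) auto
        also have "degree kn chi n 1 -` {d} \<inter> space M = {\<omega>\<in>space M. degree kn chi n 1 \<omega> = d}" by auto
        finally show "measure (distr M (count_space UNIV) (degree kn chi n 1)) {d} = a d n"
          unfolding a_def .
      qed
      finally show ?thesis .
    qed
    have "(\<lambda>n. \<Sum>d\<in>S. a d n) \<longlonglongrightarrow> (\<Sum>d\<in>S. L d)"
      by (intro tendsto_sum alim)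
    moreover have "eventually (\<lambda>n. (\<Sum>d\<in>S. a d n) = cdf (distr M borel (\<lambda>\<omega>. real (degree kn chi n 1 \<omega>))) x) sequentially"
      using ev2 by eventually_elim (rule lhs[symmetric])
    ultimately show "(\<lambda>n. cdf (distr M borel (\<lambda>\<omega>. real (degree kn chi n 1 \<omega>))) x) \<longlonglongrightarrow>
           cdf (distr (measure_pmf p) borel real) x"
      unfolding rhs by (rule Lim_transform_eventually)
  qed
  show ?thesis using pmfp wc covlim by blast
qed
end
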